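(* For an ordered forest $\mathcal F$ on $[n]$, let $f_{\mathcal F}:[n]\to[n]$ send each non-root vertex to its parent and each root to itself. Then $f_{\mathcal F\mathcal G}=f_{\mathcal F}\bullet f_{\mathcal G}$, the ideals of $f_{\mathcal F}$ are exactly the vertex sets $L_V$ of the subforests $\mathrm{Lea}_V\mathcal F$ for admissible cuts $V$, and the linear map $\mathbf H_o\to\mathbf{EFSym}$, $\mathcal F\mapsto\mathbf S^{f_{\mathcal F}}$, is an injective morphism of graded Hopf algebras. Its image is the span of the $\mathbf S^\phi$ with $\phi$ acyclic (i.e. having no cycle of length $\ge2$), which is therefore a Hopf subalgebra of $\mathbf{EFSym}$ isomorphic to $\mathbf H_o$.
   Context: An ordered forest on $n$ vertices is a rooted forest with vertex set $[n]$ (labels arbitrary), given by roots and parent map. Admissible cuts are antichains $V$ for the descendant relation; $L_V$ is the set of vertices in $V$ or descending from $V$; $\mathrm{Lea}_V\mathcal F$ and $\mathrm{Roo}_V\mathcal F$ are the induced subforests on $L_V$ and on its complement, relabelled increasingly. $\mathbf H_o$ has basis the ordered forests, product $\mathcal F\mathcal G$ = disjoint union with labels of $\mathcal G$ shifted, coproduct $\Delta\mathcal F=\sum_V\mathrm{Roo}_V\mathcal F\otimes\mathrm{Lea}_V\mathcal F$. $\mathbf{EFSym}$: over $A=\{a_{ij}:i\ne j\}$ with $a_{ij}\prec a_{kl}$ iff $j=k$, $\mathbf S^f$ ($f:[n]\to[n]$) is the sum of words $w_1\cdots w_n$ with $w_{f(j)}\prec w_j$ whenever $f(j)\ne j$;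 product $\mathbf S^f\mathbf S^g=\mathbf S^{f\bullet g}$ (shifted concatenation $i\mapsto f(i)$, $n+i\mapsto g(i)+n$); coproduct $\Delta\mathbf S^f=\sum_{I\models f}\mathbf S^{\mathrm{std}(f^{[n]\setminus I})}\otimes\mathbf S^{\mathrm{std}(f^I)}$, where $I\models f$ means $f^{-1}(I)\subseteq I$, $f^I(x)=f(x)$ if $f(x)\in I$ else $x$, and $\mathrm{std}$ conjugates by the increasing bijection onto $[|I|]$. *)

theory Defs
  imports Main "HOL-Library.Poly_Mapping"
begin

text \<open>An ordered forest on [n] is given by a partial parent map p: p v = None iff v is a
  root; p is None outside [n]; parents lie in [n]; the parent relation is acyclic.\<close>

definition parent_rel :: "(nat \<Rightarrow> nat option) \<Rightarrow> (nat \<times> nat) set" where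
  "parent_rel p = {(v, u). p v = Some u}"

definition is_oforest :: "nat \<Rightarrow> (nat \<Rightarrow> nat option) \<Rightarrow> bool" where
  "is_oforest n p \<longleftrightarrow>
     (\<forall>v. v \<notin> {1..n} \<longrightarrow> p v = None) \<and>
     (\<forall>v u. p v = Some u \<longrightarrow> u \<in> {1..n}) \<and>
     acyclic (parent_rel p)"

typedef oforest = "{(n, p). is_oforest n p}"
  by (rule exI[of _ "(0, \<lambda>_. None)"]) (auto simp: is_oforest_def parent_rel_def acyclic_def)

definition fsize :: "oforest \<Rightarrow> nat" where "fsize F = fst (Rep_oforest F)"
definition fpar :: "oforest \<Rightarrow> nat \<Rightarrow> nat option" where "fpar F = snd (Rep_oforest F)"

definition forest_prod :: "oforest \<Rightarrow> oforest \<Rightarrow> oforest" where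
  "forest_prod F G = Abs_oforest (fsize F + fsize G,
     (\<lambda>v. if v \<le> fsize F then fpar F v
          else map_option (\<lambda>u. u + fsize F) (fpar G (v - fsize F))))"

definition forest_one :: oforest where "forest_one = Abs_oforest (0, \<lambda>_. None)"

definition desc_eq :: "oforest \<Rightarrow> nat \<Rightarrow> nat \<Rightarrow> bool" where
  "desc_eq F u v \<longleftrightarrow> (u, v) \<in> (parent_rel (fpar F))\<^sup>*"

definition admissible_cut :: "oforest \<Rightarrow> nat set \<Rightarrow> bool" where
  "admissible_cut F V \<longleftrightarrow> V \<subseteq> {1..fsize F} \<and>
     (\<forall>u\<in>V. \<forall>v\<in>V. desc_eq F u v \<longrightarrow> u = v)"

definition cutL :: "oforest \<Rightarrow> nat set \<Rightarrow> nat set" where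
  "cutL F V = {u \<in> {1..fsize F}. \<exists>v\<in>V. desc_eq F u v}"

text \<open>Increasing bijection S \<rightarrow> [|S|] (for finite S \<subseteq> nat) and its inverse.\<close>
definition rk :: "nat set \<Rightarrow> nat \<Rightarrow> nat" where
  "rk S x = card {y \<in> S. y < x} + 1"

definition unrk :: "nat set \<Rightarrow> nat \<Rightarrow> nat" where
  "unrk S i = inv_into S (rk S) i"

definition induced :: "oforest \<Rightarrow> nat set \<Rightarrow> oforest" where
  "induced F S = Abs_oforest (card S,
     (\<lambda>i. if i \<in> {1..card S} then
            (case fpar F (unrk S i) of
               None \<Rightarrow> None
             | Some u \<Rightarrow> if u \<in> S then Some (rk S u) else None)
          else None))"

definition Lea :: "oforest \<Rightarrow> nat set \<Rightarrow> oforest" where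
  "Lea F V = induced F (cutL F V)"

definition Roo :: "oforest \<Rightarrow> nat set \<Rightarrow> oforest" where
  "Roo F V = induced F ({1..fsize F} - cutL F V)"

section \<open>Maps f : [n] \<rightarrow> [n] (basis of EFSym), normalised to the identity outside [n]\<close>

definition is_endo :: "nat \<Rightarrow> (nat \<Rightarrow> nat) \<Rightarrow> bool" where
  "is_endo n f \<longleftrightarrow> (\<forall>x\<in>{1..n}. f x \<in> {1..n}) \<and> (\<forall>x. x \<notin> {1..n} \<longrightarrow> f x = x)"

typedef endo = "{(n, f). is_endo n f}"
  by (rule exI[of _ "(0, id)"]) (auto simp: is_endo_def)

definition esize :: "endo \<Rightarrow> nat" where "esize f = fst (Rep_endo f)"
definition emap :: "endo \<Rightarrow> nat \<Rightarrow> nat" where "emap f = snd (Rep_endo f)"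

definition endo_prod :: "endo \<Rightarrow> endo \<Rightarrow> endo" where
  "endo_prod f g = Abs_endo (esize f + esize g,
     (\<lambda>x. if x \<le> esize f then emap f x
          else if x \<le> esize f + esize g then emap g (x - esize f) + esize f else x))"

definition endo_one :: endo where "endo_one = Abs_endo (0, id)"

definition ideal_of :: "endo \<Rightarrow> nat set \<Rightarrow> bool" where
  "ideal_of f I \<longleftrightarrow> I \<subseteq> {1..esize f} \<and> {x \<in> {1..esize f}. emap f x \<in> I} \<subseteq> I"

text \<open>std(f^I): f^I x = f x if f x \<in> I else x, on I, conjugated to [|I|].\<close>
definition restr_std :: "endo \<Rightarrow> nat set \<Rightarrow> endo" where
  "restr_std f I = Abs_endo (card I,
     (\<lambda>i. if i \<in> {1..card I} then
            (let x = unrk I i in rk I (if emap f x \<in> I then emap f x else x))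
          else i))"

definition has_long_cycle :: "endo \<Rightarrow> bool" where
  "has_long_cycle f \<longleftrightarrow> (\<exists>k\<ge>2. \<exists>x\<in>{1..esize f}. (emap f ^^ k) x = x \<and>
      (\<forall>i<k. \<forall>j<k. i \<noteq> j \<longrightarrow> (emap f ^^ i) x \<noteq> (emap f ^^ j) x))"

definition acyclic_endo :: "endo \<Rightarrow> bool" where
  "acyclic_endo f \<longleftrightarrow> \<not> has_long_cycle f"

definition f_of :: "oforest \<Rightarrow> endo" where
  "f_of F = Abs_endo (fsize F, (\<lambda>v. case fpar F v of None \<Rightarrow> v | Some u \<Rightarrow> u))"

section \<open>Free modules, products, coproducts (linear extensions of the basis formulas)\<close>

definition lin_ext :: "('a \<Rightarrow> 'b) \<Rightarrow> ('a \<Rightarrow>\<^sub>0 'k::comm_ring_1) \<Rightarrow> ('b \<Rightarrow>\<^sub>0 'k)" where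
  "lin_ext \<phi> x = (\<Sum>a\<in>Poly_Mapping.keys x. Poly_Mapping.single (\<phi> a) (Poly_Mapping.lookup x a))"

definition bilin_ext :: "('a \<Rightarrow> 'a \<Rightarrow> 'a) \<Rightarrow> ('a \<Rightarrow>\<^sub>0 'k::comm_ring_1) \<Rightarrow> ('a \<Rightarrow>\<^sub>0 'k) \<Rightarrow> ('a \<Rightarrow>\<^sub>0 'k)" where
  "bilin_ext \<mu> x y = (\<Sum>a\<in>Poly_Mapping.keys x. \<Sum>b\<in>Poly_Mapping.keys y. Poly_Mapping.single (\<mu> a b) (Poly_Mapping.lookup x a * Poly_Mapping.lookup y b))"

definition colin_ext :: "('a \<Rightarrow> ('a \<times> 'a) \<Rightarrow>\<^sub>0 'k) \<Rightarrow> ('a \<Rightarrow>\<^sub>0 'k::comm_ring_1) \<Rightarrow> (('a \<times> 'a) \<Rightarrow>\<^sub>0 'k)" where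
  "colin_ext \<Delta> x = (\<Sum>a\<in>Poly_Mapping.keys x. Poly_Mapping.map (\<lambda>c. Poly_Mapping.lookup x a * c) (\<Delta> a))"

definition tensor_map :: "('a \<Rightarrow> 'b) \<Rightarrow> (('a \<times> 'a) \<Rightarrow>\<^sub>0 'k::comm_ring_1) \<Rightarrow> (('b \<times> 'b) \<Rightarrow>\<^sub>0 'k)" where
  "tensor_map \<phi> = lin_ext (\<lambda>(a, b). (\<phi> a, \<phi> b))"

definition Ho_mult :: "(oforest \<Rightarrow>\<^sub>0 'k::comm_ring_1) \<Rightarrow> (oforest \<Rightarrow>\<^sub>0 'k) \<Rightarrow> (oforest \<Rightarrow>\<^sub>0 'k)" where
  "Ho_mult = bilin_ext forest_prod"

definition Ho_unit :: "(oforest \<Rightarrow>\<^sub>0 'k::comm_ring_1)" where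
  "Ho_unit = Poly_Mapping.single forest_one 1"

definition Ho_coprod_basis :: "oforest \<Rightarrow> ((oforest \<times> oforest) \<Rightarrow>\<^sub>0 'k::comm_ring_1)" where
  "Ho_coprod_basis F = (\<Sum>V\<in>{V. admissible_cut F V}. Poly_Mapping.single (Roo F V, Lea F V) 1)"

definition Ho_coprod :: "(oforest \<Rightarrow>\<^sub>0 'k::comm_ring_1) \<Rightarrow> ((oforest \<times> oforest) \<Rightarrow>\<^sub>0 'k)" where
  "Ho_coprod = colin_ext Ho_coprod_basis"

definition Ho_counit :: "(oforest \<Rightarrow>\<^sub>0 'k::comm_ring_1) \<Rightarrow> 'k" where
  "Ho_counit x = (\<Sum>F\<in>Poly_Mapping.keys x. if fsize F = 0 then Poly_Mapping.lookup x F else 0)"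

text \<open>EFSym (basis S^f, f an endo): product, unit, coproduct, counit.\<close>
definition EF_mult :: "(endo \<Rightarrow>\<^sub>0 'k::comm_ring_1) \<Rightarrow> (endo \<Rightarrow>\<^sub>0 'k) \<Rightarrow> (endo \<Rightarrow>\<^sub>0 'k)" where
  "EF_mult = bilin_ext endo_prod"

definition EF_unit :: "(endo \<Rightarrow>\<^sub>0 'k::comm_ring_1)" where
  "EF_unit = Poly_Mapping.single endo_one 1"

definition EF_coprod_basis :: "endo \<Rightarrow> ((endo \<times> endo) \<Rightarrow>\<^sub>0 'k::comm_ring_1)" where
  "EF_coprod_basis f = (\<Sum>I\<in>{I. ideal_of f I}.
      Poly_Mapping.single (restr_std f ({1..esize f} - I), restr_std f I) 1)"

definition EF_coprod :: "(endo \<Rightarrow>\<^sub>0 'k::comm_ring_1) \<Rightarrow> ((endo \<times> endo) \<Rightarrow>\<^sub>0 'k)" where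
  "EF_coprod = colin_ext EF_coprod_basis"

definition EF_counit :: "(endo \<Rightarrow>\<^sub>0 'k::comm_ring_1) \<Rightarrow> 'k" where
  "EF_counit x = (\<Sum>f\<in>Poly_Mapping.keys x. if esize f = 0 then Poly_Mapping.lookup x f else 0)"

definition Phi :: "(oforest \<Rightarrow>\<^sub>0 'k::comm_ring_1) \<Rightarrow> (endo \<Rightarrow>\<^sub>0 'k)" where
  "Phi = lin_ext f_of"

definition acyc_span :: "(endo \<Rightarrow>\<^sub>0 'k::comm_ring_1) set" where
  "acyc_span = {x. Poly_Mapping.keys x \<subseteq> {\<phi>. acyclic_endo \<phi>}}"

end

theory Submission
  imports Defs
begin


lemma lookup_lin_ext_inj:
  assumes "inj \<phi>"
  shows "Poly_Mapping.lookup (lin_ext \<phi> x) c = (if c \<in> range \<phi> then Poly_Mapping.lookup x (inv \<phi> c) else 0)"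
proof -
  have L: "Poly_Mapping.lookup (lin_ext \<phi> x) c = (\<Sum>a\<in>Poly_Mapping.keys x. if \<phi> a = c then Poly_Mapping.lookup x a else 0)"
    unfolding lin_ext_def lookup_sum lookup_single when_def by (rule refl)
  show ?thesis
  proof (cases "c \<in> range \<phi>")
    case True
    then obtain a0 where c: "c = \<phi> a0" by auto
    have "(\<Sum>a\<in>Poly_Mapping.keys x. if \<phi> a = c then Poly_Mapping.lookup x a else 0)
        = (\<Sum>a\<in>Poly_Mapping.keys x. if a = a0 then Poly_Mapping.lookup x a else 0)"
      using assms c by (intro sum.cong) (auto dest: injD)
    also have "\<dots> = Poly_Mapping.lookup x a0" by (simp add: in_keys_iff)
    finally show ?thesis using L c assms True by simp
  next
    case False
    then show ?thesis using L by (auto intro!: sum.neutral)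
  qed
qed

lemma lookup_lin_ext_inj_app:
  "inj \<phi> \<Longrightarrow> Poly_Mapping.lookup (lin_ext \<phi> x) (\<phi> a) = Poly_Mapping.lookup x a"
  by (simp add: lookup_lin_ext_inj)

lemma keys_lin_ext_inj:
  "inj \<phi> \<Longrightarrow> Poly_Mapping.keys (lin_ext \<phi> x) = \<phi> ` Poly_Mapping.keys x"
proof (rule set_eqI)
  fix c assume i: "inj \<phi>"
  show "c \<in> Poly_Mapping.keys (lin_ext \<phi> x) \<longleftrightarrow> c \<in> \<phi> ` Poly_Mapping.keys x"
  proof (cases "c \<in> range \<phi>")
    case True
    then obtain b where "c = \<phi> b" by auto
    then show ?thesis using i by (auto simp: in_keys_iff lookup_lin_ext_inj_app inj_eq)
  next
    case False then show ?thesis using i by (auto simp: in_keys_iff lookup_lin_ext_inj)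
  qed
qed

lemma lin_ext_sum_inj:
  "inj \<phi> \<Longrightarrow> lin_ext \<phi> (sum g A) = (\<Sum>a\<in>A. lin_ext \<phi> (g a))"
  by (rule poly_mapping_eqI) (simp add: lookup_lin_ext_inj lookup_sum)

lemma lin_ext_single_inj:
  "inj \<phi> \<Longrightarrow> lin_ext \<phi> (Poly_Mapping.single a k) = Poly_Mapping.single (\<phi> a) k"
proof (rule poly_mapping_eqI)
  fix c assume i: "inj \<phi>"
  show "Poly_Mapping.lookup (lin_ext \<phi> (Poly_Mapping.single a k)) c = Poly_Mapping.lookup (Poly_Mapping.single (\<phi> a) k) c"
  proof (cases "c \<in> range \<phi>")
    case True
    then obtain b where "c = \<phi> b" by auto
    then show ?thesis using i by (simp add: lookup_lin_ext_inj_app lookup_single inj_eq)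
  next
    case False then show ?thesis using i by (auto simp: lookup_lin_ext_inj lookup_single when_def)
  qed
qed

lemma lin_ext_map_inj:
  "inj \<phi> \<Longrightarrow> lin_ext \<phi> (Poly_Mapping.map (\<lambda>c. s * c) z) = Poly_Mapping.map (\<lambda>c. s * c) (lin_ext \<phi> z)"
proof (rule poly_mapping_eqI)
  fix c assume i: "inj \<phi>"
  show "Poly_Mapping.lookup (lin_ext \<phi> (Poly_Mapping.map (\<lambda>c. s * c) z)) c = Poly_Mapping.lookup (Poly_Mapping.map (\<lambda>c. s * c) (lin_ext \<phi> z)) c"
    unfolding lookup_lin_ext_inj[OF i] map.rep_eq by (simp add: when_def)
qed

lemma lin_ext_inj_inj: "inj \<phi> \<Longrightarrow> inj (lin_ext \<phi>)"
proof (rule injI)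
  fix x y assume i: "inj \<phi>" and e: "lin_ext \<phi> x = lin_ext \<phi> y"
  show "x = y"
  proof (rule poly_mapping_eqI)
    fix a
    have "Poly_Mapping.lookup (lin_ext \<phi> x) (\<phi> a) = Poly_Mapping.lookup (lin_ext \<phi> y) (\<phi> a)" using e by simp
    then show "Poly_Mapping.lookup x a = Poly_Mapping.lookup y a" by (simp only: lookup_lin_ext_inj_app[OF i])
  qed
qed

lemma sum_reindex_keys:
  assumes "inj \<phi>"
  shows "(\<Sum>c\<in>Poly_Mapping.keys (lin_ext \<phi> x). h c (Poly_Mapping.lookup (lin_ext \<phi> x) c))
       = (\<Sum>a\<in>Poly_Mapping.keys x. h (\<phi> a) (Poly_Mapping.lookup x a))"
  unfolding keys_lin_ext_inj[OF assms]
  by (subst sum.reindex[OF inj_on_subset[OF assms subset_UNIV]]) (simp add: lookup_lin_ext_inj_app[OF assms])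

lemma mult_hom:
  fixes x y :: "'a \<Rightarrow>\<^sub>0 'k::comm_ring_1"
  assumes "inj \<phi>" and "\<And>a b. \<phi> (\<mu> a b) = \<nu> (\<phi> a) (\<phi> b)"
  shows "lin_ext \<phi> (bilin_ext \<mu> x y) = bilin_ext \<nu> (lin_ext \<phi> x) (lin_ext \<phi> y)"
proof -
  have "bilin_ext \<nu> (lin_ext \<phi> x) (lin_ext \<phi> y) =
     (\<Sum>a\<in>Poly_Mapping.keys x. \<Sum>b\<in>Poly_Mapping.keys y. Poly_Mapping.single (\<nu> (\<phi> a) (\<phi> b)) (Poly_Mapping.lookup x a * Poly_Mapping.lookup y b))"
    unfolding bilin_ext_def keys_lin_ext_inj[OF assms(1)]
    by (simp add: sum.reindex[OF inj_on_subset[OF assms(1) subset_UNIV]] lookup_lin_ext_inj_app[OF assms(1)])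
  moreover have "lin_ext \<phi> (bilin_ext \<mu> x y) = (\<Sum>a\<in>Poly_Mapping.keys x. \<Sum>b\<in>Poly_Mapping.keys y. Poly_Mapping.single (\<phi> (\<mu> a b)) (Poly_Mapping.lookup x a * Poly_Mapping.lookup y b))"
    unfolding bilin_ext_def using assms(1) by (simp add: lin_ext_sum_inj lin_ext_single_inj)
  ultimately show ?thesis using assms(2) by simp
qed

lemma lin_ext_sum_monomials:
  assumes "inj \<phi>" "Poly_Mapping.keys z \<subseteq> range \<phi>"
  shows "lin_ext \<phi> (\<Sum>c\<in>Poly_Mapping.keys z. Poly_Mapping.single (inv \<phi> c) (Poly_Mapping.lookup z c)) = z"
proof -
  have "lin_ext \<phi> (\<Sum>c\<in>Poly_Mapping.keys z. Poly_Mapping.single (inv \<phi> c) (Poly_Mapping.lookup z c))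
      = (\<Sum>c\<in>Poly_Mapping.keys z. Poly_Mapping.single c (Poly_Mapping.lookup z c))"
    using assms by (auto simp: lin_ext_sum_inj lin_ext_single_inj f_inv_into_f intro!: sum.cong)
  also have "\<dots> = z"
    by (rule poly_mapping_eqI) (simp add: lookup_sum lookup_single when_def in_keys_iff)
  finally show ?thesis .
qed



lemma of_ok: "is_oforest (fsize F) (fpar F)"
  using Rep_oforest[of F] by (auto simp: fsize_def fpar_def)

lemma of_abs: "is_oforest n p \<Longrightarrow> fsize (Abs_oforest (n, p)) = n \<and> fpar (Abs_oforest (n, p)) = p"
  by (simp add: fsize_def fpar_def Abs_oforest_inverse)

lemma of_eqI: "fsize F = fsize G \<Longrightarrow> fpar F = fpar G \<Longrightarrow> F = G"
  by (metis Rep_oforest_inverse fpar_def fsize_def prod.collapse)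

lemma endo_ok: "is_endo (esize f) (emap f)"
  using Rep_endo[of f] by (auto simp: esize_def emap_def)

lemma endo_abs: "is_endo n e \<Longrightarrow> esize (Abs_endo (n, e)) = n \<and> emap (Abs_endo (n, e)) = e"
  by (simp add: esize_def emap_def Abs_endo_inverse)

lemma endo_eta: "f = Abs_endo (esize f, emap f)"
  by (simp add: esize_def emap_def Rep_endo_inverse)

lemma fpar_out: "v \<notin> {1..fsize F} \<Longrightarrow> fpar F v = None"
  using of_ok[of F] unfolding is_oforest_def by blast

lemma fpar_in: "fpar F v = Some u \<Longrightarrow> u \<in> {1..fsize F} \<and> v \<in> {1..fsize F}"
  using of_ok[of F] unfolding is_oforest_def by (metis option.distinct(1))

lemma fpar_acyc: "acyclic (parent_rel (fpar F))"
  using of_ok[of F] unfolding is_oforest_def by blast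

lemma fpar_noself: "fpar F v \<noteq> Some v"
proof
  assume "fpar F v = Some v"
  then have "(v, v) \<in> (parent_rel (fpar F))\<^sup>+" by (auto simp: parent_rel_def)
  then show False using fpar_acyc[of F] by (simp add: acyclic_def)
qed

definition fmap :: "oforest \<Rightarrow> nat \<Rightarrow> nat" where
  "fmap F = (\<lambda>v. case fpar F v of None \<Rightarrow> v | Some u \<Rightarrow> u)"

lemma f_of_ok: "is_endo (fsize F) (fmap F)"
  unfolding is_endo_def fmap_def
  by (auto split: option.split dest: fpar_in simp: fpar_out)

lemma esize_f_of[simp]: "esize (f_of F) = fsize F"
  and emap_f_of[simp]: "emap (f_of F) = fmap F"
  using endo_abs[OF f_of_ok[of F]] by (simp_all add: f_of_def fmap_def)

lemma inj_f_of: "inj f_of"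
proof (rule injI)
  fix F G assume e: "f_of F = f_of G"
  hence s: "fsize F = fsize G" and m: "fmap F = fmap G"
    by (metis esize_f_of, metis emap_f_of)
  have "fpar F v = fpar G v" for v
  proof -
    have mv: "fmap F v = fmap G v" using m by simp
    show ?thesis
      using mv fpar_noself[of F v] fpar_noself[of G v]
      by (cases "fpar F v"; cases "fpar G v") (auto simp: fmap_def)
  qed
  then show "F = G" using s by (intro of_eqI) auto
qed

lemma rk_mono: "finite S \<Longrightarrow> x \<in> S \<Longrightarrow> y \<in> S \<Longrightarrow> x < y \<Longrightarrow> rk S x < rk S y"
  unfolding rk_def
  by (intro add_strict_right_mono psubset_card_mono) auto

lemma rk_inj: "finite S \<Longrightarrow> inj_on (rk S) S"
  by (rule inj_onI) (metis less_irrefl linorder_neqE_nat rk_mono)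

lemma rk_range: "finite S \<Longrightarrow> x \<in> S \<Longrightarrow> rk S x \<in> {1..card S}"
proof -
  assume f: "finite S" and x: "x \<in> S"
  have "{y \<in> S. y < x} \<subset> S" using x by auto
  hence "card {y \<in> S. y < x} < card S" using f by (rule psubset_card_mono[rotated])
  thus ?thesis by (simp add: rk_def)
qed

lemma rk_bij: "finite S \<Longrightarrow> bij_betw (rk S) S {1..card S}"
proof -
  assume f: "finite S"
  have "rk S ` S \<subseteq> {1..card S}" using rk_range[OF f] by auto
  moreover have "card (rk S ` S) = card {1..card S}" using card_image[OF rk_inj[OF f]] by simp
  ultimately have "rk S ` S = {1..card S}" by (intro card_subset_eq) auto
  thus ?thesis using rk_inj[OF f] by (simp add: bij_betw_def)
qed

lemma unrk_in: "finite S \<Longrightarrow> i \<in> {1..card S} \<Longrightarrow> unrk S i \<in> S"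
  unfolding unrk_def using rk_bij
  by (metis bij_betw_def inv_into_into)

lemma rk_unrk: "finite S \<Longrightarrow> i \<in> {1..card S} \<Longrightarrow> rk S (unrk S i) = i"
  unfolding unrk_def using rk_bij
  by (metis bij_betw_def f_inv_into_f)

lemma unrk_rk: "finite S \<Longrightarrow> x \<in> S \<Longrightarrow> unrk S (rk S x) = x"
  unfolding unrk_def using rk_inj by (metis inv_into_f_f)

lemma acyclic_embed:
  assumes "\<And>a b. (a, b) \<in> r' \<Longrightarrow> (g a, g b) \<in> r" "acyclic r"
  shows "acyclic r'"
proof -
  have "(a, b) \<in> r'\<^sup>+ \<Longrightarrow> (g a, g b) \<in> r\<^sup>+" for a b
    by (induction rule: trancl_induct) (auto intro: assms(1) trancl_into_trancl)
  thus ?thesis using assms(2) unfolding acyclic_def by blast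
qed



lemma prod_ok:
  "is_oforest (fsize F + fsize G) (\<lambda>v. if v \<le> fsize F then fpar F v
          else map_option (\<lambda>u. u + fsize F) (fpar G (v - fsize F)))" (is "is_oforest ?N ?p")
proof -
  let ?n = "fsize F"
  let ?r1 = "parent_rel (fpar F)" and ?r2 = "parent_rel (fpar G)"
  have edge: "(a \<le> ?n \<and> b \<le> ?n \<and> (a, b) \<in> ?r1) \<or> (a > ?n \<and> b > ?n \<and> (a - ?n, b - ?n) \<in> ?r2)"
    if ab: "(a, b) \<in> parent_rel ?p" for a b
  proof (cases "a \<le> ?n")
    case True
    then have "fpar F a = Some b" using ab by (simp add: parent_rel_def)
    then show ?thesis using True fpar_in[of F a b] by (simp add: parent_rel_def)
  next
    case False
    then have "map_option (\<lambda>u. u + ?n) (fpar G (a - ?n)) = Some b" using ab by (simp add: parent_rel_def)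
    then obtain u where u: "fpar G (a - ?n) = Some u" "b = u + ?n" by blast
    have "u \<ge> 1" using fpar_in[OF u(1)] by simp
    then show ?thesis using False u by (simp add: parent_rel_def)
  qed
  have tr: "(a \<le> ?n \<and> b \<le> ?n \<and> (a, b) \<in> ?r1\<^sup>+) \<or> (a > ?n \<and> b > ?n \<and> (a - ?n, b - ?n) \<in> ?r2\<^sup>+)"
    if "(a, b) \<in> (parent_rel ?p)\<^sup>+" for a b
    using that
  proof (induction rule: trancl_induct)
    case (base y) then show ?case using edge[of a y] by blast
  next
    case (step y z)
    have e: "(y \<le> ?n \<and> z \<le> ?n \<and> (y, z) \<in> ?r1) \<or> (y > ?n \<and> z > ?n \<and> (y - ?n, z - ?n) \<in> ?r2)"
      using edge[OF step(2)] .
    from step(3) show ?case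
    proof
      assume h: "a \<le> ?n \<and> y \<le> ?n \<and> (a, y) \<in> ?r1\<^sup>+"
      then have "z \<le> ?n \<and> (y, z) \<in> ?r1" using e by linarith
      then show ?thesis using h by (blast intro: trancl_into_trancl)
    next
      assume h: "a > ?n \<and> y > ?n \<and> (a - ?n, y - ?n) \<in> ?r2\<^sup>+"
      then have "z > ?n \<and> (y - ?n, z - ?n) \<in> ?r2" using e by linarith
      then show ?thesis using h by (blast intro: trancl_into_trancl)
    qed
  qed
  have ac: "acyclic (parent_rel ?p)"
    unfolding acyclic_def
  proof (intro allI notI)
    fix x assume "(x, x) \<in> (parent_rel ?p)\<^sup>+"
    from tr[OF this] have "(x, x) \<in> ?r1\<^sup>+ \<or> (x - ?n, x - ?n) \<in> ?r2\<^sup>+" by blast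
    then show False using fpar_acyc[of F] fpar_acyc[of G] unfolding acyclic_def by blast
  qed
  show ?thesis unfolding is_oforest_def
  proof (intro conjI allI impI ac)
    fix v assume v: "v \<notin> {1..?N}"
    show "?p v = None"
    proof (cases "v \<le> ?n")
      case True then show ?thesis using v by (simp add: fpar_out)
    next
      case False
      have "fpar G (v - ?n) = None" by (rule fpar_out) (use v False in auto)
      then show ?thesis using False by simp
    qed
  next
    fix v u assume vu: "?p v = Some u"
    show "u \<in> {1..?N}"
    proof (cases "v \<le> ?n")
      case True then show ?thesis using vu fpar_in[of F v u] by simp
    next
      case False
      then obtain w where w: "fpar G (v - ?n) = Some w" "u = w + ?n" using vu by auto
      then show ?thesis using fpar_in[OF w(1)] by simp
    qed
  qed
qed

lemma prod_size: "fsize (forest_prod F G) = fsize F + fsize G"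
  and prod_par: "fpar (forest_prod F G) = (\<lambda>v. if v \<le> fsize F then fpar F v
          else map_option (\<lambda>u. u + fsize F) (fpar G (v - fsize F)))"
  using of_abs[OF prod_ok[of F G]] by (simp_all add: forest_prod_def)

lemma f_of_alt: "f_of F = Abs_endo (fsize F, fmap F)"
  by (simp add: f_of_def fmap_def)

lemma f_of_prod: "f_of (forest_prod F G) = endo_prod (f_of F) (f_of G)"
proof -
  have "fmap (forest_prod F G) = (\<lambda>x. if x \<le> fsize F then fmap F x
          else if x \<le> fsize F + fsize G then fmap G (x - fsize F) + fsize F else x)"
  proof
    fix x show "fmap (forest_prod F G) x = (if x \<le> fsize F then fmap F x
          else if x \<le> fsize F + fsize G then fmap G (x - fsize F) + fsize F else x)"
    proof -
      consider "x \<le> fsize F" | "fsize F < x" "x \<le> fsize F + fsize G" | "x > fsize F + fsize G" by linarith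
      then show ?thesis
      proof cases
        case 1 then show ?thesis by (simp add: fmap_def prod_par)
      next
        case 2 then show ?thesis by (simp add: fmap_def prod_par split: option.split)
      next
        case 3
        have "fpar G (x - fsize F) = None" by (rule fpar_out) (use 3 in auto)
        then show ?thesis using 3 by (simp add: fmap_def prod_par)
      qed
    qed
  qed
  moreover have L: "f_of (forest_prod F G) = Abs_endo (fsize F + fsize G, fmap (forest_prod F G))"
    using f_of_alt[of "forest_prod F G"] prod_size by simp
  ultimately show ?thesis
    unfolding L endo_prod_def esize_f_of emap_f_of by simp
qed

lemma one_ok: "is_oforest 0 (\<lambda>_. None)"
  by (auto simp: is_oforest_def parent_rel_def acyclic_def)

lemma f_of_one: "f_of forest_one = endo_one"
proof -
  have "fsize forest_one = 0" "fpar forest_one = (\<lambda>_. None)"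
    using of_abs[OF one_ok] by (simp_all add: forest_one_def)
  then show ?thesis
    by (simp add: f_of_def endo_one_def id_def)
qed

definition ipar :: "oforest \<Rightarrow> nat set \<Rightarrow> nat \<Rightarrow> nat option" where
  "ipar F S = (\<lambda>i. if i \<in> {1..card S} then
            (case fpar F (unrk S i) of
               None \<Rightarrow> None
             | Some u \<Rightarrow> if u \<in> S then Some (rk S u) else None)
          else None)"

lemma induced_ok: assumes f: "finite S" shows "is_oforest (card S) (ipar F S)"
  unfolding is_oforest_def
proof (intro conjI allI impI)
  show "ipar F S v = None" if "v \<notin> {1..card S}" for v using that unfolding ipar_def by auto
  show "u \<in> {1..card S}" if "ipar F S v = Some u" for v u using that rk_range[OF f]
    by (auto simp: ipar_def split: if_splits option.splits)
  show "acyclic (parent_rel (ipar F S))"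
  proof (rule acyclic_embed[OF _ fpar_acyc[of F], where g = "unrk S"])
    fix a b assume "(a, b) \<in> parent_rel (ipar F S)"
    then show "(unrk S a, unrk S b) \<in> parent_rel (fpar F)"
      by (auto simp: ipar_def parent_rel_def unrk_rk[OF f] split: if_splits option.splits)
  qed
qed

lemma f_of_induced: assumes f: "finite S" shows "f_of (induced F S) = restr_std (f_of F) S"
proof -
  have sz: "fsize (induced F S) = card S" and pa: "fpar (induced F S) = ipar F S"
    using of_abs[OF induced_ok[OF f, of F]] by (simp_all add: induced_def ipar_def)
  have "fmap (induced F S) = (\<lambda>i. if i \<in> {1..card S} then
            (let x = unrk S i in rk S (if fmap F x \<in> S then fmap F x else x))
          else i)"
  proof
    fix i show "fmap (induced F S) i = (if i \<in> {1..card S} then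
            (let x = unrk S i in rk S (if fmap F x \<in> S then fmap F x else x))
          else i)"
    proof (cases "i \<in> {1..card S}")
      case False then show ?thesis by (auto simp: fmap_def pa ipar_def)
    next
      case True
      define x where "x = unrk S i"
      have xS: "x \<in> S" and rx: "rk S x = i" using unrk_in[OF f True] rk_unrk[OF f True] by (simp_all add: x_def)
      show ?thesis
      proof (cases "fpar F x")
        case None then show ?thesis using True xS rx by (simp add: fmap_def pa ipar_def x_def[symmetric])
      next
        case (Some u) then show ?thesis using True xS rx by (simp add: fmap_def pa ipar_def x_def[symmetric])
      qed
    qed
  qed
  moreover have L: "f_of (induced F S) = Abs_endo (card S, fmap (induced F S))"
    using f_of_alt[of "induced F S"] sz by simp
  ultimately show ?thesis
    unfolding L restr_std_def esize_f_of emap_f_of by simp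
qed



lemma fmap_edge: "fmap F y \<noteq> y \<Longrightarrow> fpar F y = Some (fmap F y)"
  by (auto simp: fmap_def split: option.splits)

lemma chain_trancl:
  assumes "\<forall>i<k. (g i, g (Suc i)) \<in> r"
  shows "0 < j \<Longrightarrow> j \<le> k \<Longrightarrow> (g 0, g j) \<in> r\<^sup>+"
proof (induction j)
  case 0 then show ?case by simp
next
  case (Suc j)
  show ?case
  proof (cases "j = 0")
    case True then show ?thesis using assms Suc.prems by auto
  next
    case False
    then have "(g 0, g j) \<in> r\<^sup>+" using Suc by auto
    moreover have "(g j, g (Suc j)) \<in> r" using assms Suc.prems by auto
    ultimately show ?thesis by (rule trancl_into_trancl)
  qed
qed

lemma f_of_acyclic: "acyclic_endo (f_of F)"
proof -
  let ?e = "fmap F" and ?r = "parent_rel (fpar F)"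
  {
    fix k x assume k: "k \<ge> 2" and cyc: "(?e ^^ k) x = x"
      and dist: "\<forall>i<k. \<forall>j<k. i \<noteq> j \<longrightarrow> (?e ^^ i) x \<noteq> (?e ^^ j) x"
    have "\<forall>i<k. ((?e ^^ i) x, (?e ^^ Suc i) x) \<in> ?r"
    proof (intro allI impI)
      fix i assume i: "i < k"
      have ne: "(?e ^^ i) x \<noteq> (?e ^^ Suc i) x"
      proof (cases "Suc i < k")
        case True then show ?thesis using dist i by (metis n_not_Suc_n)
      next
        case False
        then have "Suc i = k" using i by simp
        then have "(?e ^^ Suc i) x = (?e ^^ 0) x" using cyc by simp
        moreover have "i \<noteq> 0" using k \<open>Suc i = k\<close> by auto
        moreover have "(?e ^^ i) x \<noteq> (?e ^^ 0) x" using dist[rule_format, of i 0] i k \<open>i \<noteq> 0\<close> by simp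
        ultimately show ?thesis by simp
      qed
      then have "?e ((?e ^^ i) x) \<noteq> (?e ^^ i) x" by simp
      then have "fpar F ((?e ^^ i) x) = Some ((?e ^^ Suc i) x)" by (simp add: fmap_edge)
      then show "((?e ^^ i) x, (?e ^^ Suc i) x) \<in> ?r" by (simp add: parent_rel_def)
    qed
    from chain_trancl[where g = "\<lambda>i. (?e ^^ i) x", OF this, of k] k
    have "(x, (?e ^^ k) x) \<in> ?r\<^sup>+" by simp
    with cyc fpar_acyc[of F] have False by (simp add: acyclic_def)
  }
  note * = this
  show ?thesis unfolding acyclic_endo_def has_long_cycle_def emap_f_of esize_f_of
  proof
    assume "\<exists>k\<ge>2. \<exists>x\<in>{1..fsize F}. (?e ^^ k) x = x \<and>
      (\<forall>i<k. \<forall>j<k. i \<noteq> j \<longrightarrow> (?e ^^ i) x \<noteq> (?e ^^ j) x)"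
    then obtain k x where "k \<ge> 2" "(?e ^^ k) x = x"
      "\<forall>i<k. \<forall>j<k. i \<noteq> j \<longrightarrow> (?e ^^ i) x \<noteq> (?e ^^ j) x" by blast
    then show False by (rule *)
  qed
qed


lemma acyclic_in_range:
  assumes a: "acyclic_endo \<phi>"
  shows "\<phi> \<in> range f_of"
proof -
  define n where "n = esize \<phi>"
  define e where "e = emap \<phi>"
  have en: "is_endo n e" using endo_ok[of \<phi>] by (simp add: n_def e_def)
  define p where "p = (\<lambda>v. if v \<in> {1..n} \<and> e v \<noteq> v then Some (e v) else None)"
  let ?r = "parent_rel p"
  have tr: "(a, b) \<in> ?r\<^sup>+ \<Longrightarrow> \<exists>k>0. (e ^^ k) a = b \<and> e a \<noteq> a \<and> a \<in> {1..n}" for a b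
  proof (induction rule: trancl_induct)
    case (base y) then show ?case
      by (intro exI[of _ 1]) (auto simp: parent_rel_def p_def split: if_splits)
  next
    case (step y z)
    then obtain k where "k > 0" "(e ^^ k) a = y" "e a \<noteq> a" "a \<in> {1..n}" by blast
    moreover have "z = e y" using step(2) by (auto simp: parent_rel_def p_def split: if_splits)
    ultimately show ?case by (intro exI[of _ "Suc k"]) auto
  qed
  have ac: "acyclic ?r"
  proof (rule ccontr)
    assume "\<not> acyclic ?r"
    then obtain x where "(x, x) \<in> ?r\<^sup>+" by (auto simp: acyclic_def)
    from tr[OF this] obtain k where k: "k > 0" "(e ^^ k) x = x" and ex: "e x \<noteq> x" and xn: "x \<in> {1..n}" by blast
    define m where "m = (LEAST m. 0 < m \<and> (e ^^ m) x = x)"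
    have m: "0 < m \<and> (e ^^ m) x = x" unfolding m_def by (rule LeastI[of _ k]) (use k in auto)
    have mmin: "\<And>m'. 0 < m' \<Longrightarrow> m' < m \<Longrightarrow> (e ^^ m') x \<noteq> x"
      unfolding m_def using not_less_Least by blast
    have m2: "m \<ge> 2"
    proof (rule ccontr)
      assume "\<not> m \<ge> 2"
      then have "m = 1" using m by auto
      then show False using m ex by simp
    qed
    have dist: "(e ^^ i) x \<noteq> (e ^^ j) x" if ij: "i < j" "j < m" for i j
    proof
      assume eq: "(e ^^ i) x = (e ^^ j) x"
      have "(e ^^ (m - j + i)) x = (e ^^ (m - j)) ((e ^^ i) x)" by (simp add: funpow_add)
      also have "\<dots> = (e ^^ (m - j)) ((e ^^ j) x)" using eq by simp
      also have "\<dots> = (e ^^ (m - j + j)) x" by (simp add: funpow_add)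
      also have "\<dots> = x" using ij m by simp
      finally have "(e ^^ (m - j + i)) x = x" .
      moreover have a1: "0 < m - j + i" and a2: "m - j + i < m" using ij by auto
      moreover have "(e ^^ (m - j + i)) x \<noteq> x" using mmin[OF a1 a2] .
      ultimately show False by simp
    qed
    have d2: "\<forall>i<m. \<forall>j<m. i \<noteq> j \<longrightarrow> (e ^^ i) x \<noteq> (e ^^ j) x"
      using dist by (metis linorder_neqE_nat)
    have "has_long_cycle \<phi>"
      unfolding has_long_cycle_def using m2 m xn d2 unfolding e_def n_def by blast
    then show False using a by (simp add: acyclic_endo_def)
  qed
  have ok: "is_oforest n p"
    unfolding is_oforest_def
  proof (intro conjI allI impI ac)
    show "p v = None" if "v \<notin> {1..n}" for v using that unfolding p_def by auto
    show "u \<in> {1..n}" if "p v = Some u" for v u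
    proof -
      have "v \<in> {1..n}" "u = e v" using that by (auto simp: p_def split: if_splits)
      then show ?thesis using en by (simp add: is_endo_def)
    qed
  qed
  define F where "F = Abs_oforest (n, p)"
  have sF: "fsize F = n" and pF: "fpar F = p" using of_abs[OF ok] by (simp_all add: F_def)
  have "fmap F = e"
  proof
    fix v show "fmap F v = e v"
    proof (cases "v \<in> {1..n}")
      case True then show ?thesis by (simp add: fmap_def pF p_def)
    next
      case False then show ?thesis using en by (simp add: fmap_def pF p_def is_endo_def)
    qed
  qed
  then have "f_of F = \<phi>" using sF by (simp add: f_of_alt n_def e_def endo_eta[symmetric])
  then show ?thesis by blast
qed

lemma acyclic_iff_range: "acyclic_endo \<phi> \<longleftrightarrow> \<phi> \<in> range f_of"
  using acyclic_in_range f_of_acyclic by blast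



definition topset :: "oforest \<Rightarrow> nat set \<Rightarrow> nat set" where
  "topset F S = {v \<in> S. \<forall>u. fpar F v = Some u \<longrightarrow> u \<notin> S}"

lemma ideal_iff: "ideal_of (f_of F) I \<longleftrightarrow>
   I \<subseteq> {1..fsize F} \<and> (\<forall>x u. fpar F x = Some u \<longrightarrow> u \<in> I \<longrightarrow> x \<in> I)"
proof
  assume "ideal_of (f_of F) I"
  then show "I \<subseteq> {1..fsize F} \<and> (\<forall>x u. fpar F x = Some u \<longrightarrow> u \<in> I \<longrightarrow> x \<in> I)"
    unfolding ideal_of_def
  proof (intro conjI allI impI)
    assume h: "I \<subseteq> {1..esize (f_of F)} \<and> {x \<in> {1..esize (f_of F)}. emap (f_of F) x \<in> I} \<subseteq> I"
    then show "I \<subseteq> {1..fsize F}" by simp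
    fix x u assume xu: "fpar F x = Some u" and u: "u \<in> I"
    have "x \<in> {1..fsize F}" using fpar_in[OF xu] by simp
    moreover have "fmap F x = u" using xu by (simp add: fmap_def)
    ultimately have "x \<in> {x \<in> {1..esize (f_of F)}. emap (f_of F) x \<in> I}" using u by simp
    then show "x \<in> I" using h by blast
  qed
next
  assume h: "I \<subseteq> {1..fsize F} \<and> (\<forall>x u. fpar F x = Some u \<longrightarrow> u \<in> I \<longrightarrow> x \<in> I)"
  show "ideal_of (f_of F) I" unfolding ideal_of_def
  proof (intro conjI subsetI)
    fix x assume "x \<in> {x \<in> {1..esize (f_of F)}. emap (f_of F) x \<in> I}"
    then show "x \<in> I" using h by (cases "fpar F x") (auto simp: fmap_def)
  qed (use h in auto)
qed

lemma desc_rt: "desc_eq F u v \<longleftrightarrow> (u, v) \<in> (parent_rel (fpar F))\<^sup>*"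
  by (simp add: desc_eq_def)

lemma ideal_closed:
  assumes I: "ideal_of (f_of F) I" and uv: "(u, v) \<in> (parent_rel (fpar F))\<^sup>*" and v: "v \<in> I"
  shows "u \<in> I"
  using uv v
proof (induction rule: converse_rtrancl_induct)
  case base then show ?case .
next
  case (step y z) then show ?case using I by (auto simp: ideal_iff parent_rel_def)
qed

lemma cut_ideal: "admissible_cut F V \<Longrightarrow> ideal_of (f_of F) (cutL F V)"
  unfolding ideal_iff cutL_def desc_rt
proof (intro conjI allI impI subsetI)
  fix x u assume "fpar F x = Some u" "u \<in> {u \<in> {1..fsize F}. \<exists>v\<in>V. (u, v) \<in> (parent_rel (fpar F))\<^sup>*}"
  then show "x \<in> {u \<in> {1..fsize F}. \<exists>v\<in>V. (u, v) \<in> (parent_rel (fpar F))\<^sup>*}"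
    by (auto dest: fpar_in intro: converse_rtrancl_into_rtrancl simp: parent_rel_def)
qed auto

lemma wf_up: "wf ((parent_rel (fpar F))\<inverse>)"
proof (rule finite_acyclic_wf_converse[OF _ fpar_acyc])
  have "parent_rel (fpar F) \<subseteq> {1..fsize F} \<times> {1..fsize F}"
    by (auto simp: parent_rel_def dest: fpar_in)
  then show "finite (parent_rel (fpar F))" by (rule finite_subset) auto
qed

lemma ideal_cut:
  assumes I: "ideal_of (f_of F) I"
  shows "admissible_cut F (topset F I) \<and> cutL F (topset F I) = I"
proof -
  let ?r = "parent_rel (fpar F)"
  have In: "I \<subseteq> {1..fsize F}" using I by (simp add: ideal_iff)
  have adm: "admissible_cut F (topset F I)"
    unfolding admissible_cut_def desc_rt
  proof (intro conjI ballI impI)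
    show "topset F I \<subseteq> {1..fsize F}" using In by (auto simp: topset_def)
  next
    fix u v assume u: "u \<in> topset F I" and v: "v \<in> topset F I" and uv: "(u, v) \<in> ?r\<^sup>*"
    show "u = v"
    proof (rule ccontr)
      assume "u \<noteq> v"
      then have "(u, v) \<in> ?r\<^sup>+" using uv by (simp add: rtrancl_eq_or_trancl)
      then obtain w where uw: "(u, w) \<in> ?r" and wv: "(w, v) \<in> ?r\<^sup>*" by (blast dest: tranclD)
      have "v \<in> I" using v by (simp add: topset_def)
      then have "w \<in> I" using ideal_closed[OF I wv] by simp
      then show False using u uw by (auto simp: topset_def parent_rel_def)
    qed
  qed
  have "x \<in> I \<longrightarrow> (\<exists>v\<in>topset F I. (x, v) \<in> ?r\<^sup>*)" for x
  proof (induction x rule: wf_induct[OF wf_up[of F]])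
    case (1 x)
    show ?case
    proof
      assume xI: "x \<in> I"
      show "\<exists>v\<in>topset F I. (x, v) \<in> ?r\<^sup>*"
      proof (cases "x \<in> topset F I")
        case True then show ?thesis by blast
      next
        case False
        then obtain u where xu: "fpar F x = Some u" and uI: "u \<in> I" using xI by (auto simp: topset_def)
        then have "(u, x) \<in> ?r\<inverse>" by (simp add: parent_rel_def)
        then obtain v where "v \<in> topset F I" "(u, v) \<in> ?r\<^sup>*" using 1 uI by blast
        moreover have "(x, u) \<in> ?r" using xu by (simp add: parent_rel_def)
        ultimately show ?thesis by (blast intro: converse_rtrancl_into_rtrancl)
      qed
    qed
  qed
  then have "cutL F (topset F I) = I"
    using In ideal_closed[OF I] unfolding cutL_def desc_rt topset_def by blast
  with adm show ?thesis by simp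
qed

lemma top_cut:
  assumes V: "admissible_cut F V"
  shows "topset F (cutL F V) = V"
proof -
  let ?r = "parent_rel (fpar F)"
  have Vn: "V \<subseteq> {1..fsize F}" and anti: "\<And>u v. u \<in> V \<Longrightarrow> v \<in> V \<Longrightarrow> (u, v) \<in> ?r\<^sup>* \<Longrightarrow> u = v"
    using V by (auto simp: admissible_cut_def desc_rt)
  show ?thesis
  proof (intro set_eqI iffI)
    fix x assume x: "x \<in> topset F (cutL F V)"
    then obtain w where w: "w \<in> V" "(x, w) \<in> ?r\<^sup>*" by (auto simp: topset_def cutL_def desc_rt)
    show "x \<in> V"
    proof (cases "x = w")
      case True then show ?thesis using w by simp
    next
      case False
      then have "(x, w) \<in> ?r\<^sup>+" using w by (simp add: rtrancl_eq_or_trancl)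
      then obtain y where xy: "(x, y) \<in> ?r" and yw: "(y, w) \<in> ?r\<^sup>*" by (blast dest: tranclD)
      have "y \<in> {1..fsize F}" using xy by (auto simp: parent_rel_def dest: fpar_in)
      then have "y \<in> cutL F V" using w yw by (auto simp: cutL_def desc_rt)
      then show ?thesis using x xy by (auto simp: topset_def parent_rel_def)
    qed
  next
    fix v assume v: "v \<in> V"
    have vc: "v \<in> cutL F V" using v Vn by (auto simp: cutL_def desc_rt)
    moreover have "u \<notin> cutL F V" if vu: "fpar F v = Some u" for u
    proof
      assume "u \<in> cutL F V"
      then obtain w where w: "w \<in> V" "(u, w) \<in> ?r\<^sup>*" by (auto simp: cutL_def desc_rt)
      have "(v, u) \<in> ?r" using vu by (simp add: parent_rel_def)
      then have vw: "(v, w) \<in> ?r\<^sup>+" using w by (simp add: rtrancl_into_trancl2)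
      then have "v = w" using anti[OF v w(1)] by (simp add: trancl_into_rtrancl)
      then show False using vw fpar_acyc[of F] by (simp add: acyclic_def)
    qed
    ultimately show "v \<in> topset F (cutL F V)" by (auto simp: topset_def)
  qed
qed

lemma ideals_eq: "{I. ideal_of (f_of F) I} = {cutL F V | V. admissible_cut F V}"
  using ideal_cut cut_ideal by blast

lemma cut_bij: "bij_betw (cutL F) {V. admissible_cut F V} {I. ideal_of (f_of F) I}"
  unfolding bij_betw_def
proof
  show "inj_on (cutL F) {V. admissible_cut F V}"
    by (rule inj_onI) (metis mem_Collect_eq top_cut)
  show "cutL F ` {V. admissible_cut F V} = {I. ideal_of (f_of F) I}"
    using ideals_eq by blast
qed



lemma inj_pair_f_of: "inj (\<lambda>(a, b). (f_of a, f_of b))"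
  by (rule injI) (auto dest: injD[OF inj_f_of])

lemma finite_cutL: "finite (cutL F V)"
  by (rule finite_subset[of _ "{1..fsize F}"]) (auto simp: cutL_def)

lemma coprod_basis:
  "tensor_map f_of (Ho_coprod_basis F :: (oforest \<times> oforest) \<Rightarrow>\<^sub>0 'k::comm_ring_1) = EF_coprod_basis (f_of F)"
proof -
  let ?g = "\<lambda>I. Poly_Mapping.single (restr_std (f_of F) ({1..fsize F} - I), restr_std (f_of F) I) (1::'k)"
  have "tensor_map f_of (Ho_coprod_basis F :: (oforest \<times> oforest) \<Rightarrow>\<^sub>0 'k)
      = (\<Sum>V\<in>{V. admissible_cut F V}. Poly_Mapping.single (f_of (Roo F V), f_of (Lea F V)) 1)"
    unfolding tensor_map_def Ho_coprod_basis_def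
    by (simp add: lin_ext_sum_inj[OF inj_pair_f_of] lin_ext_single_inj[OF inj_pair_f_of])
  also have "\<dots> = (\<Sum>V\<in>{V. admissible_cut F V}. ?g (cutL F V))"
    by (intro sum.cong refl) (simp add: Roo_def Lea_def f_of_induced finite_cutL)
  also have "\<dots> = (\<Sum>I\<in>{I. ideal_of (f_of F) I}. ?g I)"
    by (rule sum.reindex_bij_betw[OF cut_bij])
  also have "\<dots> = EF_coprod_basis (f_of F)"
    by (simp add: EF_coprod_basis_def)
  finally show ?thesis .
qed

lemma Phi_inj: "inj Phi"
  unfolding Phi_def by (rule lin_ext_inj_inj[OF inj_f_of])

lemma Phi_mult: "Phi (Ho_mult x y) = EF_mult (Phi x) (Phi y)"
  unfolding Phi_def Ho_mult_def EF_mult_def by (rule mult_hom[where \<phi>=f_of and \<mu>=forest_prod and \<nu>=endo_prod, OF inj_f_of f_of_prod])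

lemma Phi_unit: "Phi Ho_unit = EF_unit"
  unfolding Phi_def Ho_unit_def EF_unit_def by (simp add: lin_ext_single_inj[OF inj_f_of] f_of_one)

lemma Phi_coprod: "EF_coprod (Phi x) = tensor_map f_of (Ho_coprod x)"
proof -
  have "EF_coprod (Phi x) = (\<Sum>a\<in>Poly_Mapping.keys x. Poly_Mapping.map (\<lambda>c. Poly_Mapping.lookup x a * c) (EF_coprod_basis (f_of a)))"
    unfolding EF_coprod_def colin_ext_def Phi_def
    by (rule sum_reindex_keys[OF inj_f_of, where h = "\<lambda>c v. Poly_Mapping.map (\<lambda>t. v * t) (EF_coprod_basis c)"])
  also have "\<dots> = tensor_map f_of (Ho_coprod x)"
    unfolding Ho_coprod_def colin_ext_def tensor_map_def
    by (simp add: lin_ext_sum_inj[OF inj_pair_f_of] lin_ext_map_inj[OF inj_pair_f_of]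
        coprod_basis[unfolded tensor_map_def])
  finally show ?thesis .
qed

lemma Phi_counit: "EF_counit (Phi x) = Ho_counit x"
proof -
  have "EF_counit (Phi x) = (\<Sum>a\<in>Poly_Mapping.keys x. if esize (f_of a) = 0 then Poly_Mapping.lookup x a else 0)"
    unfolding EF_counit_def Phi_def
    by (rule sum_reindex_keys[OF inj_f_of, where h = "\<lambda>c v. if esize c = 0 then v else 0"])
  then show ?thesis by (simp add: Ho_counit_def)
qed

lemma Phi_range: "range Phi = acyc_span"
proof
  show "range Phi \<subseteq> acyc_span"
    unfolding acyc_span_def Phi_def
    by (auto simp: keys_lin_ext_inj[OF inj_f_of] f_of_acyclic)
  show "acyc_span \<subseteq> range Phi"
  proof
    fix z assume "z \<in> acyc_span"
    then have "Poly_Mapping.keys z \<subseteq> range f_of"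
      unfolding acyc_span_def using acyclic_in_range by blast
    from lin_ext_sum_monomials[OF inj_f_of this] show "z \<in> range Phi"
      unfolding Phi_def by (rule range_eqI[OF sym])
  qed
qed

theorem mainTheorem13:
  shows
    "(\<forall>F G. f_of (forest_prod F G) = endo_prod (f_of F) (f_of G))
   \<and> (\<forall>F. {I. ideal_of (f_of F) I} = {cutL F V | V. admissible_cut F V})
   \<and> (\<forall>F. esize (f_of F) = fsize F)
   \<and> inj (Phi :: (oforest \<Rightarrow>\<^sub>0 'k::field) \<Rightarrow> _)
   \<and> (\<forall>x y :: oforest \<Rightarrow>\<^sub>0 'k. Phi (Ho_mult x y) = EF_mult (Phi x) (Phi y))
   \<and> Phi (Ho_unit :: oforest \<Rightarrow>\<^sub>0 'k) = EF_unit
   \<and> (\<forall>x :: oforest \<Rightarrow>\<^sub>0 'k. EF_coprod (Phi x) = tensor_map f_of (Ho_coprod x))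
   \<and> (\<forall>x :: oforest \<Rightarrow>\<^sub>0 'k. EF_counit (Phi x) = Ho_counit x)
   \<and> range (Phi :: (oforest \<Rightarrow>\<^sub>0 'k) \<Rightarrow> _) = acyc_span
   \<and> (EF_unit :: endo \<Rightarrow>\<^sub>0 'k) \<in> acyc_span
   \<and> (\<forall>x\<in>(acyc_span :: (endo \<Rightarrow>\<^sub>0 'k) set). \<forall>y\<in>acyc_span. EF_mult x y \<in> acyc_span)
   \<and> (\<forall>x\<in>(acyc_span :: (endo \<Rightarrow>\<^sub>0 'k) set).
        Poly_Mapping.keys (EF_coprod x) \<subseteq> {\<phi>. acyclic_endo \<phi>} \<times> {\<phi>. acyclic_endo \<phi>})
   \<and> bij_betw (Phi :: (oforest \<Rightarrow>\<^sub>0 'k) \<Rightarrow> _) UNIV acyc_span"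
proof -
  have R: "range (Phi :: (oforest \<Rightarrow>\<^sub>0 'k) \<Rightarrow> _) = acyc_span" by (rule Phi_range)
  have U: "(EF_unit :: endo \<Rightarrow>\<^sub>0 'k) \<in> acyc_span"
    using R Phi_unit by (metis rangeI)
  have M: "\<forall>x\<in>(acyc_span :: (endo \<Rightarrow>\<^sub>0 'k) set). \<forall>y\<in>acyc_span. EF_mult x y \<in> acyc_span"
  proof (intro ballI)
    fix x y :: "endo \<Rightarrow>\<^sub>0 'k" assume "x \<in> acyc_span" "y \<in> acyc_span"
    then obtain x' y' where "x = Phi x'" "y = Phi y'" using R by (metis imageE)
    then show "EF_mult x y \<in> acyc_span" using R Phi_mult by (metis rangeI)
  qed
  have C: "\<forall>x\<in>(acyc_span :: (endo \<Rightarrow>\<^sub>0 'k) set).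
        Poly_Mapping.keys (EF_coprod x) \<subseteq> {\<phi>. acyclic_endo \<phi>} \<times> {\<phi>. acyclic_endo \<phi>}"
  proof (intro ballI)
    fix x :: "endo \<Rightarrow>\<^sub>0 'k" assume "x \<in> acyc_span"
    then obtain x' where x: "x = Phi x'" using R by (metis imageE)
    have "Poly_Mapping.keys (EF_coprod x) = (\<lambda>(a, b). (f_of a, f_of b)) ` Poly_Mapping.keys (Ho_coprod x')"
      unfolding x Phi_coprod tensor_map_def by (rule keys_lin_ext_inj[OF inj_pair_f_of])
    then show "Poly_Mapping.keys (EF_coprod x) \<subseteq> {\<phi>. acyclic_endo \<phi>} \<times> {\<phi>. acyclic_endo \<phi>}"
      using f_of_acyclic by auto
  qed
  have B: "bij_betw (Phi :: (oforest \<Rightarrow>\<^sub>0 'k) \<Rightarrow> _) UNIV acyc_span"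
    unfolding bij_betw_def using Phi_inj R by blast
  have I: "inj (Phi :: (oforest \<Rightarrow>\<^sub>0 'k) \<Rightarrow> _)" by (rule Phi_inj)
  have PM: "\<forall>x y :: oforest \<Rightarrow>\<^sub>0 'k. Phi (Ho_mult x y) = EF_mult (Phi x) (Phi y)" using Phi_mult by blast
  have PU: "Phi (Ho_unit :: oforest \<Rightarrow>\<^sub>0 'k) = EF_unit" by (rule Phi_unit)
  have PC: "\<forall>x :: oforest \<Rightarrow>\<^sub>0 'k. EF_coprod (Phi x) = tensor_map f_of (Ho_coprod x)" using Phi_coprod by blast
  have PE: "\<forall>x :: oforest \<Rightarrow>\<^sub>0 'k. EF_counit (Phi x) = Ho_counit x" using Phi_counit by blast
  show ?thesis
    using f_of_prod ideals_eq esize_f_of I PM PU PC PE R U M C B by blast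
qed


end
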